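(* Let $T$ be a minimal homeomorphism of a compact metric space $X$, let $G$ be a locally compact second countable group, let $f:X\to G$ be continuous, and let $\{H_x\}_{x\in X}$ be a consistent selection of subgroups for $f$. Let $U\subseteq G$ be a relatively compact open set. Then the set $$M_U=\{x\in X: E_x\cap\big(\overline U H_x\setminus UH_x\big)=\varnothing\}$$ is open in $X$.
   Context: The cocycle generated by $f$ is $f(n,x)=f(T^{n-1}x)\cdots f(x)$ for $n\ge1$, $f(0,x)=e$, $f(n,x)=f(-n,T^nx)^{-1}$ for $n<0$; $T_f(x,g)=(Tx,f(x)g)$ on $X\times G$. The (local) essential range at $x\in X$ is $E_x=E_x(f)$, the set of all $g\in G$ such that for every open neighbourhood $\mathcal U$ of $x$ in $X$ and every open neighbourhood $V$ of $e$ in $G$ there is $n\in\mathbb Z$ and $y\in\mathcal U\cap T^{-n}\mathcal U$ with $f(n,y)\in Vg$. Let $\mathcal C(G)$ be the space of closed subgroups of $G$ with the Fell topology (the topology on closed subsets with basis sets $\{S: S\cap K=\varnothing, S\cap O_i\neq\varnothing, i=1,\dots,k\}$, $K$ compact, $O_i$ open). A consistent selection of subgroups is a continuous map $x\mapsto H_x$ from $X$ to $\mathcal C(G)$ such that $H_x\subseteq E_x$ for every $x$ and $H_{T^nx}=f(n,x)H_xf(n,x)^{-1}$ for all $x\in X$, $n\in\mathbb Z$. *)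

theory Defs
  imports "HOL-Analysis.Analysis"
begin

definition zpow :: "('a \<Rightarrow> 'a) \<Rightarrow> int \<Rightarrow> 'a \<Rightarrow> 'a" where
  "zpow T n = (if 0 \<le> n then T ^^ nat n else (inv T) ^^ nat (- n))"

definition homeo :: "('a::topological_space \<Rightarrow> 'a) \<Rightarrow> bool" where
  "homeo T \<longleftrightarrow> bij T \<and> continuous_on UNIV T \<and> continuous_on UNIV (inv T)"

definition minimal_homeo :: "('a::topological_space \<Rightarrow> 'a) \<Rightarrow> bool" where
  "minimal_homeo T \<longleftrightarrow> homeo T \<and> (\<forall>x. closure {zpow T n x | n. True} = UNIV)"

text \<open>The group G is written additively (type class topological_group_add, not
  assumed commutative): product g h is g + h, identity e is 0, inverse is uminus.\<close>
fun cocycle_nat :: "('a \<Rightarrow> 'a) \<Rightarrow> ('a \<Rightarrow> 'g::group_add) \<Rightarrow> nat \<Rightarrow> 'a \<Rightarrow> 'g" where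
  "cocycle_nat T f 0 x = 0"
| "cocycle_nat T f (Suc n) x = f ((T ^^ n) x) + cocycle_nat T f n x"

definition cocycle :: "('a \<Rightarrow> 'a) \<Rightarrow> ('a \<Rightarrow> 'g::group_add) \<Rightarrow> int \<Rightarrow> 'a \<Rightarrow> 'g" where
  "cocycle T f n x = (if 0 \<le> n then cocycle_nat T f (nat n) x
                      else - cocycle_nat T f (nat (- n)) (zpow T n x))"

definition ess_range :: "('a::topological_space \<Rightarrow> 'a) \<Rightarrow> ('a \<Rightarrow> 'g::{group_add,topological_space}) \<Rightarrow> 'a \<Rightarrow> 'g set" where
  "ess_range T f x = {g. \<forall>U V. open U \<longrightarrow> x \<in> U \<longrightarrow> open V \<longrightarrow> (0::'g) \<in> V \<longrightarrow>
      (\<exists>n::int. \<exists>y. y \<in> U \<and> zpow T n y \<in> U \<and> cocycle T f n y \<in> {v + g | v. v \<in> V})}"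

definition closed_subgroup :: "'g::{group_add,topological_space} set \<Rightarrow> bool" where
  "closed_subgroup H \<longleftrightarrow> closed H \<and> 0 \<in> H \<and> (\<forall>a\<in>H. \<forall>b\<in>H. a + b \<in> H) \<and> (\<forall>a\<in>H. - a \<in> H)"

definition fell_topology :: "'g::topological_space set topology" where
  "fell_topology = topology_generated_by
     ({{S. closed S \<and> S \<inter> K = {}} | K. compact K} \<union> {{S. closed S \<and> S \<inter> W \<noteq> {}} | W. open W})"

definition subgroup_space :: "'g::{group_add,topological_space} set topology" where
  "subgroup_space = subtopology fell_topology {H. closed_subgroup H}"

definition set_plus :: "'g::plus set \<Rightarrow> 'g set \<Rightarrow> 'g set" where
  "set_plus A B = {a + b | a b. a \<in> A \<and> b \<in> B}"

definition consistent_selection ::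
  "('a::topological_space \<Rightarrow> 'a) \<Rightarrow> ('a \<Rightarrow> 'g::{group_add,topological_space}) \<Rightarrow> ('a \<Rightarrow> 'g set) \<Rightarrow> bool" where
  "consistent_selection T f H \<longleftrightarrow>
     continuous_map euclidean subgroup_space H \<and>
     (\<forall>x. H x \<subseteq> ess_range T f x) \<and>
     (\<forall>x. \<forall>n::int. H (zpow T n x) = {cocycle T f n x + h - cocycle T f n x | h. h \<in> H x})"

end

theory Submission
  imports Defs
begin

lemma openUNIV_vimage: "continuous_on UNIV g \<Longrightarrow> open S \<Longrightarrow> open (g -` S)"
  using continuous_on_open_vimage[of UNIV g] by auto

lemma zpow_step:
  assumes "bij T"
  shows "zpow T (k+1) x = T (zpow T k x)"
proof (cases "0 \<le> k")
  case True
  then have "nat (k+1) = Suc (nat k)" by simp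
  with True show ?thesis by (simp add: zpow_def)
next
  case False
  define i where "i = nat (-k) - 1"
  have i: "nat (-k) = Suc i" "nat (-(k+1)) = i" using False unfolding i_def by arith+
  have "T (inv T ((inv T ^^ i) x)) = (inv T ^^ i) x"
    using assms by (simp add: bij_is_surj surj_f_inv_f)
  moreover have "(inv T ^^ Suc i) x = inv T ((inv T ^^ i) x)" by simp
  ultimately show ?thesis using False i
    by (auto simp add: zpow_def)
qed

lemma zpow_0: "zpow T 0 x = x" by (simp add: zpow_def)

lemma zpow_down:
  assumes "bij T"
  shows "zpow T (k-1) x = inv T (zpow T k x)"
proof -
  have "zpow T k x = T (zpow T (k-1) x)" using zpow_step[OF assms, of "k-1"] by simp
  then show ?thesis using assms by (simp add: bij_is_inj inv_f_f)
qed

lemma zpow_add: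
  assumes "bij T"
  shows "zpow T (n+m) x = zpow T n (zpow T m x)"
proof (induction n rule: int_induct[where k=0])
  case base
  then show ?case by (simp add: zpow_0)
next
  case (step1 i)
  have "zpow T (i + 1 + m) x = zpow T ((i + m) + 1) x" by (simp add: algebra_simps)
  also have "\<dots> = T (zpow T (i+m) x)" by (rule zpow_step[OF assms])
  also have "\<dots> = zpow T (i+1) (zpow T m x)" using step1 zpow_step[OF assms] by simp
  finally show ?case .
next
  case (step2 i)
  have "zpow T (i - 1 + m) x = zpow T ((i + m) - 1) x" by (simp add: algebra_simps)
  also have "\<dots> = inv T (zpow T (i+m) x)" by (rule zpow_down[OF assms])
  also have "\<dots> = zpow T (i-1) (zpow T m x)" using step2 zpow_down[OF assms] by simp
  finally show ?case .
qed

lemma cocnat_suc': "cocycle_nat T f (Suc i) w = cocycle_nat T f i (T w) + f w"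
proof (induction i)
  case 0
  then show ?case by simp
next
  case (Suc i)
  have "cocycle_nat T f (Suc (Suc i)) w = f ((T ^^ Suc i) w) + cocycle_nat T f (Suc i) w" by simp
  also have "\<dots> = f ((T ^^ i) (T w)) + (cocycle_nat T f i (T w) + f w)"
    using Suc by (simp add: funpow_swap1)
  also have "\<dots> = cocycle_nat T f (Suc i) (T w) + f w" by (simp add: add.assoc)
  finally show ?case .
qed

lemma cocycle_0: "cocycle T f 0 x = 0" by (simp add: cocycle_def)

lemma cocycle_step:
  assumes "bij T"
  shows "cocycle T f (k+1) z = f (zpow T k z) + cocycle T f k z"
proof (cases "0 \<le> k")
  case True
  then have "nat (k+1) = Suc (nat k)" by simp
  with True show ?thesis by (simp add: cocycle_def zpow_def)
next
  case False
  define i where "i = nat (-k) - 1"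
  have i: "nat (-k) = Suc i" "nat (-(k+1)) = i" using False unfolding i_def by arith+
  define w where "w = zpow T k z"
  have Tw: "zpow T (k+1) z = T w" unfolding w_def by (rule zpow_step[OF assms])
  have c1: "cocycle T f (k+1) z = - cocycle_nat T f i (T w)"
  proof (cases "k + 1 = 0")
    case True
    then show ?thesis using i by (simp add: cocycle_def)
  next
    case False2: False
    then show ?thesis using i False Tw by (simp add: cocycle_def)
  qed
  have c2: "cocycle T f k z = - f w + - cocycle_nat T f i (T w)"
  proof -
    have "cocycle T f k z = - cocycle_nat T f (Suc i) w"
      using False i by (simp add: cocycle_def w_def del: cocycle_nat.simps)
    then show ?thesis by (simp only: cocnat_suc' minus_add)
  qed
  show ?thesis unfolding c1 c2 w_def[symmetric] by (simp only: add_minus_cancel)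
qed

lemma cocycle_add:
  assumes "bij T"
  shows "cocycle T f (n+m) z = cocycle T f n (zpow T m z) + cocycle T f m z"
proof (induction n rule: int_induct[where k=0])
  case base
  then show ?case by (simp add: cocycle_0)
next
  case (step1 i)
  have "cocycle T f (i + 1 + m) z = cocycle T f ((i + m) + 1) z" by (simp add: algebra_simps)
  also have "\<dots> = f (zpow T (i+m) z) + cocycle T f (i+m) z" by (rule cocycle_step[OF assms])
  also have "\<dots> = f (zpow T i (zpow T m z)) + (cocycle T f i (zpow T m z) + cocycle T f m z)"
    using step1 zpow_add[OF assms] by simp
  also have "\<dots> = cocycle T f (i+1) (zpow T m z) + cocycle T f m z"
    using cocycle_step[OF assms, of f i "zpow T m z"] by (simp add: add.assoc)
  finally show ?case .
next
  case (step2 i)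
  have e1: "cocycle T f (i + m) z = f (zpow T (i - 1 + m) z) + cocycle T f (i - 1 + m) z"
    using cocycle_step[OF assms, of f "i - 1 + m" z] by simp
  have e2: "cocycle T f i (zpow T m z) = f (zpow T (i - 1) (zpow T m z)) + cocycle T f (i - 1) (zpow T m z)"
    using cocycle_step[OF assms, of f "i - 1" "zpow T m z"] by simp
  have a: "cocycle T f (i - 1 + m) z = - f (zpow T (i - 1 + m) z) + cocycle T f (i + m) z"
    using e1 by (simp add: add.assoc[symmetric])
  have b: "cocycle T f (i - 1) (zpow T m z) = - f (zpow T (i - 1) (zpow T m z)) + cocycle T f i (zpow T m z)"
    using e2 by (simp add: add.assoc[symmetric])
  show ?case using a b step2 zpow_add[OF assms, of "i - 1" m z] by (simp add: add.assoc)
qed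


lemma cont_funpow: "continuous_on UNIV (g::'a::topological_space \<Rightarrow> 'a) \<Longrightarrow> continuous_on UNIV (g ^^ k)"
proof (induction k)
  case 0
  have "g ^^ 0 = (\<lambda>x. x)" by auto
  then show ?case by (simp add: continuous_on_id')
next
  case (Suc k)
  have "g ^^ Suc k = (\<lambda>x. g ((g ^^ k) x))" by auto
  then show ?case using Suc continuous_on_compose2[of UNIV g UNIV "g ^^ k"] by auto
qed

lemma cont_zpow: "homeo T \<Longrightarrow> continuous_on UNIV (zpow T k)"
  unfolding homeo_def zpow_def by (auto intro: cont_funpow)

lemma cont_cocnat:
  fixes f :: "'a::topological_space \<Rightarrow> 'g::topological_group_add"
  assumes "continuous_on UNIV f" "continuous_on UNIV T"
  shows "continuous_on UNIV (cocycle_nat T f k)"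
proof (induction k)
  case 0
  have "cocycle_nat T f 0 = (\<lambda>x. 0)" by auto
  then show ?case by (simp add: continuous_on_const)
next
  case (Suc k)
  have e: "cocycle_nat T f (Suc k) = (\<lambda>x. f ((T ^^ k) x) + cocycle_nat T f k x)" by auto
  have "continuous_on UNIV (\<lambda>x. f ((T ^^ k) x))"
    using continuous_on_compose2[of UNIV f UNIV "T ^^ k"] assms cont_funpow[OF assms(2)] by auto
  then show ?case unfolding e using Suc by (intro continuous_on_add)
qed

lemma cont_cocycle:
  fixes f :: "'a::topological_space \<Rightarrow> 'g::topological_group_add"
  assumes "homeo T" "continuous_on UNIV f"
  shows "continuous_on UNIV (cocycle T f k)"
proof (cases "0 \<le> k")
  case True
  then have "cocycle T f k = cocycle_nat T f (nat k)" by (auto simp: cocycle_def)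
  then show ?thesis using cont_cocnat assms by (auto simp: homeo_def)
next
  case False
  then have e: "cocycle T f k = (\<lambda>x. - cocycle_nat T f (nat (-k)) (zpow T k x))"
    by (auto simp: cocycle_def)
  have "continuous_on UNIV (\<lambda>x. cocycle_nat T f (nat (-k)) (zpow T k x))"
    using continuous_on_compose2[of UNIV "cocycle_nat T f (nat (-k))" UNIV "zpow T k"]
      cont_cocnat[of f T] assms cont_zpow by (auto simp: homeo_def)
  then show ?thesis unfolding e by (intro continuous_on_minus)
qed

lemma sel_closed_subgroup:
  assumes "continuous_map euclidean subgroup_space H"
  shows "closed_subgroup (H x)"
proof -
  have "H x \<in> topspace subgroup_space" using assms unfolding continuous_map_def by auto
  then show ?thesis unfolding subgroup_space_def by simp
qed

lemma sel_lsc: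
  assumes "continuous_map euclidean subgroup_space H" "open W" "H x \<inter> W \<noteq> {}"
  shows "\<exists>N. open N \<and> x \<in> N \<and> (\<forall>y\<in>N. H y \<inter> W \<noteq> {})"
proof -
  define Ob where "Ob = {S. closed S \<and> S \<inter> W \<noteq> {}}"
  have "openin fell_topology Ob"
    unfolding fell_topology_def Ob_def
    by (rule topology_generated_by_Basis) (use assms(2) in blast)
  then have "openin subgroup_space ({H. closed_subgroup H} \<inter> Ob)"
    unfolding subgroup_space_def by (rule openin_subtopology_Int2)
  then have "openin euclidean {y \<in> topspace euclidean. H y \<in> {H. closed_subgroup H} \<inter> Ob}"
    using assms(1) openin_continuous_map_preimage by blast
  then have op: "open {y. H y \<in> {H. closed_subgroup H} \<inter> Ob}" by simp
  have "x \<in> {y. H y \<in> {H. closed_subgroup H} \<inter> Ob}"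
    using sel_closed_subgroup[OF assms(1), of x] assms(3) unfolding Ob_def closed_subgroup_def by auto
  with op show ?thesis unfolding Ob_def by blast
qed


lemma essH:
  fixes T :: "'a::topological_space \<Rightarrow> 'a"
    and f :: "'a \<Rightarrow> 'g::topological_group_add"
  assumes hT: "homeo T" and hf: "continuous_on UNIV f"
    and hH: "continuous_map euclidean subgroup_space H"
    and sub: "\<forall>y. H y \<subseteq> ess_range T f y"
    and g: "g \<in> ess_range T f x" and h: "h \<in> H x"
  shows "g + h \<in> ess_range T f x"
  unfolding ess_range_def
proof (rule CollectI, intro allI impI)
  fix U :: "'a set" and V :: "'g set"
  assume U: "open U" "x \<in> U" and V: "open V" "0 \<in> V"
  have bT: "bij T" using hT by (simp add: homeo_def)
  have "continuous_on UNIV (\<lambda>p::'g\<times>'g. fst p + snd p + - h + - g)"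
    by (intro continuous_intros)
  then have "open ((\<lambda>p::'g\<times>'g. fst p + snd p + - h + - g) -` V)"
    using V openUNIV_vimage by blast
  moreover have "(g, h) \<in> (\<lambda>p::'g\<times>'g. fst p + snd p + - h + - g) -` V"
    using V by (simp add: add.assoc)
  ultimately obtain A B where AB: "open A" "open B" "(g,h) \<in> A \<times> B"
    "A \<times> B \<subseteq> (\<lambda>p::'g\<times>'g. fst p + snd p + - h + - g) -` V"
    by (rule open_prod_elim)
  have key: "a + b + - h + - g \<in> V" if "a \<in> A" "b \<in> B" for a b
    using AB(4) that by auto
  obtain N where N: "open N" "x \<in> N" "\<forall>y\<in>N. H y \<inter> B \<noteq> {}"
    using sel_lsc[OF hH AB(2)] h AB(3) by blast
  define V2 where "V2 = (\<lambda>v. v + g) -` A"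
  have "continuous_on UNIV (\<lambda>v::'g. v + g)" by (intro continuous_intros)
  then have V2o: "open V2" unfolding V2_def using AB(1) openUNIV_vimage by blast
  have V20: "0 \<in> V2" unfolding V2_def using AB(3) by simp
  from g have "\<exists>n::int. \<exists>y. y \<in> U \<inter> N \<and> zpow T n y \<in> U \<inter> N \<and> cocycle T f n y \<in> {v + g | v. v \<in> V2}"
  proof -
    have gE: "\<And>U' V'. open U' \<Longrightarrow> x \<in> U' \<Longrightarrow> open V' \<Longrightarrow> 0 \<in> V' \<Longrightarrow>
      \<exists>n::int. \<exists>y. y \<in> U' \<and> zpow T n y \<in> U' \<and> cocycle T f n y \<in> {v + g | v. v \<in> V'}"
      using g unfolding ess_range_def by blast
    show ?thesis using gE[of "U \<inter> N" V2] U N V2o V20 by (simp add: open_Int)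
  qed
  then obtain n y where y: "y \<in> U \<inter> N" "zpow T n y \<in> U \<inter> N" "cocycle T f n y \<in> A"
    unfolding V2_def by auto
  obtain hy where hy: "hy \<in> H y" "hy \<in> B" using N(3) y(1) by blast
  have hyE: "hy \<in> ess_range T f y" using sub hy(1) by blast
  define V3 where "V3 = (\<lambda>v. v + hy) -` B"
  have "continuous_on UNIV (\<lambda>v::'g. v + hy)" by (intro continuous_intros)
  then have V3o: "open V3" unfolding V3_def using AB(2) openUNIV_vimage by blast
  have V30: "0 \<in> V3" unfolding V3_def using hy by simp
  define W where "W = U \<inter> zpow T n -` U \<inter> cocycle T f n -` A"
  have Wo: "open W" unfolding W_def
    using U(1) AB(1) openUNIV_vimage[OF cont_zpow[OF hT]] openUNIV_vimage[OF cont_cocycle[OF hT hf]]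
    by (intro open_Int) auto
  have yW: "y \<in> W" unfolding W_def using y by auto
  from hyE have "\<exists>m::int. \<exists>z. z \<in> W \<and> zpow T m z \<in> W \<and> cocycle T f m z \<in> {v + hy | v. v \<in> V3}"
  proof -
    have gE: "\<And>U' V'. open U' \<Longrightarrow> y \<in> U' \<Longrightarrow> open V' \<Longrightarrow> 0 \<in> V' \<Longrightarrow>
      \<exists>n::int. \<exists>z. z \<in> U' \<and> zpow T n z \<in> U' \<and> cocycle T f n z \<in> {v + hy | v. v \<in> V'}"
      using hyE unfolding ess_range_def by blast
    show ?thesis using gE[of W V3] Wo yW V3o V30 by simp
  qed
  then obtain m z where z: "z \<in> W" "zpow T m z \<in> W" "cocycle T f m z \<in> B"
    unfolding V3_def by auto
  have c: "cocycle T f (n+m) z = cocycle T f n (zpow T m z) + cocycle T f m z"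
    by (rule cocycle_add[OF bT])
  have a: "cocycle T f n (zpow T m z) \<in> A" using z(2) unfolding W_def by auto
  have zz: "zpow T (n+m) z \<in> U" using z(2) zpow_add[OF bT] unfolding W_def by auto
  define v where "v = cocycle T f n (zpow T m z) + cocycle T f m z + - h + - g"
  have vV: "v \<in> V" unfolding v_def using key a z(3) by blast
  have "cocycle T f (n+m) z = v + (g + h)" unfolding c v_def by (simp only: add.assoc minus_add_cancel left_minus add_0_right)
  then have "cocycle T f (n+m) z \<in> {v + (g + h) | v. v \<in> V}" using vV by blast
  moreover have "z \<in> U" using z(1) unfolding W_def by auto
  ultimately show "\<exists>n::int. \<exists>y. y \<in> U \<and> zpow T n y \<in> U \<and> cocycle T f n y \<in> {v + (g + h) | v. v \<in> V}"
    using zz by blast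
qed

lemma charM:
  fixes Hx Ex :: "'g::{group_add,topological_space} set"
  assumes "closed_subgroup Hx" "\<forall>g\<in>Ex. \<forall>h\<in>Hx. g + h \<in> Ex"
  shows "(Ex \<inter> (set_plus K Hx - set_plus U Hx) = {}) \<longleftrightarrow> (\<forall>u\<in>K. u \<in> Ex \<longrightarrow> u \<in> set_plus U Hx)"
proof
  assume L: "Ex \<inter> (set_plus K Hx - set_plus U Hx) = {}"
  show "\<forall>u\<in>K. u \<in> Ex \<longrightarrow> u \<in> set_plus U Hx"
  proof (intro ballI impI)
    fix u assume "u \<in> K" "u \<in> Ex"
    moreover have "0 \<in> Hx" using assms(1) by (simp add: closed_subgroup_def)
    ultimately have "u \<in> set_plus K Hx" unfolding set_plus_def by force
    with L \<open>u \<in> Ex\<close> show "u \<in> set_plus U Hx" by blast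
  qed
next
  assume R: "\<forall>u\<in>K. u \<in> Ex \<longrightarrow> u \<in> set_plus U Hx"
  show "Ex \<inter> (set_plus K Hx - set_plus U Hx) = {}"
  proof (rule ccontr)
    assume "Ex \<inter> (set_plus K Hx - set_plus U Hx) \<noteq> {}"
    then obtain t where t: "t \<in> Ex" "t \<in> set_plus K Hx" "t \<notin> set_plus U Hx" by blast
    then obtain u h where uh: "u \<in> K" "h \<in> Hx" "t = u + h" unfolding set_plus_def by blast
    have "- h \<in> Hx" using uh(2) assms(1) by (simp add: closed_subgroup_def)
    then have "t + - h \<in> Ex" using assms(2) t(1) by blast
    then have "u \<in> Ex" using uh(3) by (simp add: add.assoc)
    then have "u \<in> set_plus U Hx" using R uh(1) by blast
    then obtain w h' where w: "w \<in> U" "h' \<in> Hx" "u = w + h'" unfolding set_plus_def by blast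
    have "h' + h \<in> Hx" using w(2) uh(2) assms(1) by (simp add: closed_subgroup_def)
    moreover have "t = w + (h' + h)" using uh(3) w(3) by (simp add: add.assoc)
    ultimately have "t \<in> set_plus U Hx" using w(1) unfolding set_plus_def by blast
    with t(3) show False by blast
  qed
qed


theorem lemma3p1:
  fixes T :: "'a::metric_space \<Rightarrow> 'a"
    and f :: "'a \<Rightarrow> 'g::{topological_group_add, t2_space, second_countable_topology}"
    and H :: "'a \<Rightarrow> 'g set"
    and U :: "'g set"
  assumes "compact (UNIV :: 'a set)"
    and "minimal_homeo T"
    and "locally_compact_space (euclidean :: 'g topology)"
    and "continuous_on UNIV f"
    and "consistent_selection T f H"
    and "open U" and "compact (closure U)"
  shows "open {x. ess_range T f x \<inter> (set_plus (closure U) (H x) - set_plus U (H x)) = {}}"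
proof -
  have hT: "homeo T" using assms(2) by (simp add: minimal_homeo_def)
  have hf: "continuous_on UNIV f" by (rule assms(4))
  have hH: "continuous_map euclidean subgroup_space H" and sub: "\<forall>y. H y \<subseteq> ess_range T f y"
    using assms(5) by (auto simp: consistent_selection_def)
  have csg: "\<And>y. closed_subgroup (H y)" by (rule sel_closed_subgroup[OF hH])
  have EH: "\<And>y. \<forall>g\<in>ess_range T f y. \<forall>h\<in>H y. g + h \<in> ess_range T f y"
    using essH[OF hT hf hH sub] by blast
  define K where "K = closure U"
  define M where "M = {x. ess_range T f x \<inter> (set_plus K (H x) - set_plus U (H x)) = {}}"
  have Mchar: "\<And>y. y \<in> M \<longleftrightarrow> (\<forall>u\<in>K. u \<in> ess_range T f y \<longrightarrow> u \<in> set_plus U (H y))"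
    unfolding M_def mem_Collect_eq by (rule charM[OF csg EH])
  have "open M"
  proof (subst open_subopen, intro ballI)
    fix x assume xM: "x \<in> M"
    have loc: "\<forall>u\<in>K. \<exists>p. open (fst p) \<and> u \<in> fst p \<and> open (snd p) \<and> x \<in> snd p \<and>
        (\<forall>y\<in>snd p. \<forall>u'\<in>fst p. u' \<in> ess_range T f y \<longrightarrow> u' \<in> set_plus U (H y))"
    proof
      fix u assume uK: "u \<in> K"
      show "\<exists>p. open (fst p) \<and> u \<in> fst p \<and> open (snd p) \<and> x \<in> snd p \<and>
        (\<forall>y\<in>snd p. \<forall>u'\<in>fst p. u' \<in> ess_range T f y \<longrightarrow> u' \<in> set_plus U (H y))"
      proof (cases "u \<in> ess_range T f x")
        case True
        then have "u \<in> set_plus U (H x)" using xM Mchar uK by blast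
        then obtain w h0 where w: "w \<in> U" "h0 \<in> H x" "u = w + h0" unfolding set_plus_def by blast
        have "continuous_on UNIV (\<lambda>p::'g\<times>'g. fst p + - snd p)" by (intro continuous_intros)
        then have "open ((\<lambda>p::'g\<times>'g. fst p + - snd p) -` U)"
          using assms(6) openUNIV_vimage by blast
        moreover have "(u, h0) \<in> (\<lambda>p::'g\<times>'g. fst p + - snd p) -` U"
          using w by (simp add: add.assoc)
        ultimately obtain A B where AB: "open A" "open B" "(u,h0) \<in> A \<times> B"
          "A \<times> B \<subseteq> (\<lambda>p::'g\<times>'g. fst p + - snd p) -` U"
          by (rule open_prod_elim)
        obtain N where N: "open N" "x \<in> N" "\<forall>y\<in>N. H y \<inter> B \<noteq> {}"
          using sel_lsc[OF hH AB(2)] w(2) AB(3) by blast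
        have "\<forall>y\<in>N. \<forall>u'\<in>A. u' \<in> ess_range T f y \<longrightarrow> u' \<in> set_plus U (H y)"
        proof (intro ballI impI)
          fix y u' assume y: "y \<in> N" and u': "u' \<in> A"
          obtain b where b: "b \<in> H y" "b \<in> B" using N(3) y by blast
          have "u' + - b \<in> U" using AB(4) u' b(2) by auto
          moreover have "u' = (u' + - b) + b" by (simp add: add.assoc)
          ultimately show "u' \<in> set_plus U (H y)" using b(1) unfolding set_plus_def by blast
        qed
        then show ?thesis using AB N by (intro exI[of _ "(A, N)"]) auto
      next
        case False
        then obtain U0 V0 where UV: "open U0" "x \<in> U0" "open V0" "0 \<in> V0"
          and no: "\<not> (\<exists>n::int. \<exists>y. y \<in> U0 \<and> zpow T n y \<in> U0 \<and> cocycle T f n y \<in> {v + u | v. v \<in> V0})"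
          unfolding ess_range_def by blast
        have "continuous_on UNIV (\<lambda>p::'g\<times>'g. fst p + snd p + - u)" by (intro continuous_intros)
        then have "open ((\<lambda>p::'g\<times>'g. fst p + snd p + - u) -` V0)"
          using UV(3) openUNIV_vimage by blast
        moreover have "(0, u) \<in> (\<lambda>p::'g\<times>'g. fst p + snd p + - u) -` V0"
          using UV(4) by simp
        ultimately obtain V1 A where AB: "open V1" "open A" "(0,u) \<in> V1 \<times> A"
          "V1 \<times> A \<subseteq> (\<lambda>p::'g\<times>'g. fst p + snd p + - u) -` V0"
          by (rule open_prod_elim)
        have "\<forall>y\<in>U0. \<forall>u'\<in>A. u' \<in> ess_range T f y \<longrightarrow> u' \<in> set_plus U (H y)"
        proof (intro ballI impI)
          fix y u' assume y: "y \<in> U0" and u': "u' \<in> A" and E: "u' \<in> ess_range T f y"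
          have "\<And>U' V'. open U' \<Longrightarrow> y \<in> U' \<Longrightarrow> open V' \<Longrightarrow> 0 \<in> V' \<Longrightarrow>
            \<exists>n::int. \<exists>z. z \<in> U' \<and> zpow T n z \<in> U' \<and> cocycle T f n z \<in> {v + u' | v. v \<in> V'}"
            using E unfolding ess_range_def by blast
          from this[of U0 V1] obtain n z v where nz: "z \<in> U0" "zpow T n z \<in> U0"
            "cocycle T f n z = v + u'" "v \<in> V1"
            using UV AB y by auto
          have "v + u' + - u \<in> V0" using AB(4) nz(4) u' by auto
          moreover have "cocycle T f n z = (v + u' + - u) + u"
            using nz(3) by (simp add: add.assoc)
          ultimately have "\<exists>n::int. \<exists>y. y \<in> U0 \<and> zpow T n y \<in> U0 \<and> cocycle T f n y \<in> {v + u | v. v \<in> V0}"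
            using nz(1,2) by blast
          with no show "u' \<in> set_plus U (H y)" by blast
        qed
        then show ?thesis using AB UV by (intro exI[of _ "(A, U0)"]) auto
      qed
    qed
    then obtain A N where AN: "\<forall>u\<in>K. open (A u) \<and> u \<in> A u \<and> open (N u) \<and> x \<in> N u \<and>
        (\<forall>y\<in>N u. \<forall>u'\<in>A u. u' \<in> ess_range T f y \<longrightarrow> u' \<in> set_plus U (H y))"
    proof -
      from bchoice[OF loc] obtain P where P: "\<forall>u\<in>K. open (fst (P u)) \<and> u \<in> fst (P u) \<and> open (snd (P u)) \<and> x \<in> snd (P u) \<and>
        (\<forall>y\<in>snd (P u). \<forall>u'\<in>fst (P u). u' \<in> ess_range T f y \<longrightarrow> u' \<in> set_plus U (H y))" by blast
      show ?thesis by (rule that[of "\<lambda>u. fst (P u)" "\<lambda>u. snd (P u)"]) (use P in blast)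
    qed
    have AN1: "\<And>u. u \<in> K \<Longrightarrow> open (A u)" using AN by blast
    have AN2: "\<And>u. u \<in> K \<Longrightarrow> u \<in> A u" using AN by blast
    have AN3: "\<And>u. u \<in> K \<Longrightarrow> open (N u)" using AN by blast
    have AN4: "\<And>u. u \<in> K \<Longrightarrow> x \<in> N u" using AN by blast
    have AN5: "\<And>u y u'. u \<in> K \<Longrightarrow> y \<in> N u \<Longrightarrow> u' \<in> A u \<Longrightarrow> u' \<in> ess_range T f y \<Longrightarrow> u' \<in> set_plus U (H y)"
      using AN by blast
    have cK: "compact K" unfolding K_def by (rule assms(7))
    have cov: "K \<subseteq> (\<Union>u\<in>K. A u)" using AN2 by blast
    obtain D where D: "D \<subseteq> K" "finite D" "K \<subseteq> (\<Union>u\<in>D. A u)"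
      by (rule compactE_image[OF cK AN1 cov])
    define NN where "NN = (\<Inter>u\<in>D. N u)"
    have "\<forall>u\<in>D. open (N u)" using D(1) AN3 by blast
    then have "open NN" unfolding NN_def using D(2) by (rule open_INT[rotated])
    moreover have "x \<in> NN" unfolding NN_def using D(1) AN4 by blast
    moreover have "NN \<subseteq> M"
    proof
      fix y assume y: "y \<in> NN"
      show "y \<in> M" unfolding Mchar
      proof (intro ballI impI)
        fix u' assume u': "u' \<in> K" "u' \<in> ess_range T f y"
        then obtain u where u: "u \<in> D" "u' \<in> A u" using D(3) by blast
        then have "y \<in> N u" using y unfolding NN_def by blast
        then show "u' \<in> set_plus U (H y)" using AN5[of u y u'] u D(1) u' by blast
      qed
    qed
    ultimately show "\<exists>T. open T \<and> x \<in> T \<and> T \<subseteq> M" by blast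
  qed
  then show ?thesis unfolding M_def K_def .
qed

end
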